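(* Suppose that a filtered vector space $V$ has positive Harder and Narasimhan data $\operatorname{HN}(\overrightarrow{\mu},\overrightarrow{r})$. Fixing a nonnegative integer $z \geq 0$, for each nonnegative integer $m \geq 0$, let $H^{\# S_{m,z}(\overrightarrow{\mu})}$ be the subspace of $V^{\otimes m}$ given by $$H^{\# S_{m,z}(\overrightarrow{\mu})} := \sum_{i=1}^{\# S_{m,z}(\overrightarrow{\mu})} \bigotimes_{j=1}^m V_{a_{ji}}.$$ Then $$\lim_{m \to \infty} \frac{\dim H^{\# S_{m,z}(\overrightarrow{\mu})}}{\dim V^{\otimes m}} = 1.$$
   Context: All vector spaces are over a fixed algebraically closed field $\mathbf{k}$ of characteristic zero. $V$ is a finite dimensional $\mathbf{k}$-vector space with a filtration (in the sense of Faltings and Wüstholz) $V = F^{\lambda_0}V \supsetneq F^{\lambda_1}V \supsetneq \dots \supsetneq F^{\lambda_n}V \supsetneq F^{\lambda_{n+1}}V = 0$, for real numbers $0 \leq \lambda_0 < \lambda_1 < \dots < \lambda_{n+1}$; slopes $\mu(\cdot)$ of subspaces and subquotients are computed with respect to the induced filtration. By Faltings–Wüstholz, $V$ admits a canonical Harder and Narasimhan filtration $0 = V_0 \subsetneq V_1 \subsetneq \dots \subsetneq V_\ell = V$ whose successive quotients $V_i/V_{i-1}$ are semistable with strictly decreasing slopes. Put $\mu_i := \mu(V_i/V_{i-1})$, $r_i := \dim(V_i/V_{i-1})$, $d_i := r_i\mu_i$ for $i=1,\dots,\ell$, $\overrightarrow{\mu} = (\mu_1,\dots,\mu_\ell)$,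 $\overrightarrow{r} = (r_1,\dots,r_\ell)$; this is the Harder and Narasimhan data $\operatorname{HN}(\overrightarrow{\mu},\overrightarrow{r})$, called positive if $\sum_{i=1}^\ell d_i > 0$. Let $[\ell] := \{1,\dots,\ell\}$. For $\mathbf{a} = (a_1,\dots,a_m) \in [\ell]^m$ set $v_{\overrightarrow{\mu}}(\mathbf{a}) := \sum_{j=1}^m \mu_{a_j}$, and $S_{m,z}(\overrightarrow{\mu}) := \{\mathbf{a} \in [\ell]^m : \sum_{j=1}^m \mu_{a_j} \geq z\}$. Write the elements of $[\ell]^m$ in decreasing order with respect to $v_{\overrightarrow{\mu}}(\cdot)$ as $\mathbf{a}_i = (a_{1i},\dots,a_{mi})$, $i = 1, 2, \dots$; thus $S_{m,z}(\overrightarrow{\mu})$ consists of the first $\# S_{m,z}(\overrightarrow{\mu})$ elements $\mathbf{a}_1,\dots,\mathbf{a}_{\# S_{m,z}(\overrightarrow{\mu})}$. *)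

theory Defs
  imports Complex_Main "HOL-Computational_Algebra.Polynomial" "HOL-Library.Function_Algebras"
begin

(* Vector spaces are modelled concretely as spaces of 'k-valued functions
   (coordinates w.r.t. a chosen basis); scalar multiplication is pointwise. *)

definition scl :: "'k::field \<Rightarrow> ('a \<Rightarrow> 'k) \<Rightarrow> ('a \<Rightarrow> 'k)" where
  "scl c f = (\<lambda>x. c * f x)"

abbreviation fsubspace :: "('a \<Rightarrow> 'k::field) set \<Rightarrow> bool" where
  "fsubspace \<equiv> module.subspace scl"

abbreviation fspan :: "('a \<Rightarrow> 'k::field) set \<Rightarrow> ('a \<Rightarrow> 'k) set" where
  "fspan \<equiv> module.span scl"

abbreviation fdim :: "('a \<Rightarrow> 'k::field) set \<Rightarrow> nat" where
  "fdim \<equiv> vector_space.dim scl"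

definition ssum :: "('a \<Rightarrow> 'k::field) set \<Rightarrow> ('a \<Rightarrow> 'k) set \<Rightarrow> ('a \<Rightarrow> 'k) set" where
  "ssum A B = {x + y | x y. x \<in> A \<and> y \<in> B}"

definition alg_closed :: "'k::field itself \<Rightarrow> bool" where
  "alg_closed _ \<longleftrightarrow> (\<forall>p :: 'k poly. degree p \<ge> 1 \<longrightarrow> (\<exists>x. poly p x = 0))"

(* A Faltings--Wuestholz filtration of V = ('n => 'k):
   V = F 0 \<supsetneq> F 1 \<supsetneq> ... \<supsetneq> F n \<supsetneq> F (n+1) = 0,
   where F i = F^{lam i}V and 0 \<le> lam 0 < lam 1 < ... < lam (n+1). *)
definition is_filtration ::
  "nat \<Rightarrow> (nat \<Rightarrow> real) \<Rightarrow> (nat \<Rightarrow> ('n \<Rightarrow> 'k::field) set) \<Rightarrow> bool" where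
  "is_filtration n lam F \<longleftrightarrow>
     0 \<le> lam 0 \<and> (\<forall>i\<le>n. lam i < lam (Suc i)) \<and>
     (\<forall>i\<le>Suc n. fsubspace (F i)) \<and>
     F 0 = UNIV \<and> (\<forall>i\<le>n. F (Suc i) \<subset> F i) \<and> F (Suc n) = {0}"

(* degree of the subquotient W/U (U \<subseteq> W) with the induced filtration
   F^{lam i}(W/U) = ((F^{lam i}V \<inter> W) + U)/U *)
definition subq_deg ::
  "nat \<Rightarrow> (nat \<Rightarrow> real) \<Rightarrow> (nat \<Rightarrow> ('n \<Rightarrow> 'k::field) set) \<Rightarrow> ('n \<Rightarrow> 'k) set \<Rightarrow> ('n \<Rightarrow> 'k) set \<Rightarrow> real" where
  "subq_deg n lam F W U =
     (\<Sum>i\<le>n. lam i * (real (fdim (ssum (F i \<inter> W) U)) - real (fdim (ssum (F (Suc i) \<inter> W) U))))"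

definition subq_slope ::
  "nat \<Rightarrow> (nat \<Rightarrow> real) \<Rightarrow> (nat \<Rightarrow> ('n \<Rightarrow> 'k::field) set) \<Rightarrow> ('n \<Rightarrow> 'k) set \<Rightarrow> ('n \<Rightarrow> 'k) set \<Rightarrow> real" where
  "subq_slope n lam F W U = subq_deg n lam F W U / (real (fdim W) - real (fdim U))"

definition subq_semistable ::
  "nat \<Rightarrow> (nat \<Rightarrow> real) \<Rightarrow> (nat \<Rightarrow> ('n \<Rightarrow> 'k::field) set) \<Rightarrow> ('n \<Rightarrow> 'k) set \<Rightarrow> ('n \<Rightarrow> 'k) set \<Rightarrow> bool" where
  "subq_semistable n lam F W U \<longleftrightarrow>
     (\<forall>X. fsubspace X \<and> U \<subset> X \<and> X \<subseteq> W \<longrightarrow> subq_slope n lam F X U \<le> subq_slope n lam F W U)"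

definition is_HN_filtration ::
  "nat \<Rightarrow> (nat \<Rightarrow> real) \<Rightarrow> (nat \<Rightarrow> ('n \<Rightarrow> 'k::field) set) \<Rightarrow> nat \<Rightarrow> (nat \<Rightarrow> ('n \<Rightarrow> 'k) set) \<Rightarrow> bool" where
  "is_HN_filtration n lam F l Vs \<longleftrightarrow>
     1 \<le> l \<and> (\<forall>i\<le>l. fsubspace (Vs i)) \<and> Vs 0 = {0} \<and> Vs l = UNIV \<and>
     (\<forall>i<l. Vs i \<subset> Vs (Suc i)) \<and>
     (\<forall>i\<in>{1..l}. subq_semistable n lam F (Vs i) (Vs (i - 1))) \<and>
     (\<forall>i\<in>{1..<l}. subq_slope n lam F (Vs (Suc i)) (Vs i) < subq_slope n lam F (Vs i) (Vs (i - 1)))"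

definition HN_mu where
  "HN_mu n lam F Vs i = subq_slope n lam F (Vs i) (Vs (i - 1))"

definition HN_r :: "(nat \<Rightarrow> ('n \<Rightarrow> 'k::field) set) \<Rightarrow> nat \<Rightarrow> nat" where
  "HN_r Vs i = fdim (Vs i) - fdim (Vs (i - 1))"

(* Tensor powers: V^{\<otimes>m} is modelled as functions on index lists (multi-indices);
   the elementary tensor w_1 \<otimes> ... \<otimes> w_m is (i_1..i_m) \<mapsto> \<Prod> w_j(i_j). *)
definition tens :: "('n \<Rightarrow> 'k::field) list \<Rightarrow> ('n list \<Rightarrow> 'k)" where
  "tens ws = (\<lambda>is. if length is = length ws then (\<Prod>j<length ws. (ws ! j) (is ! j)) else 0)"

definition tensor_span :: "('n \<Rightarrow> 'k::field) set list \<Rightarrow> ('n list \<Rightarrow> 'k) set" where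
  "tensor_span Ws = fspan {tens ws | ws. length ws = length Ws \<and> (\<forall>j<length Ws. ws ! j \<in> Ws ! j)}"

definition S_set :: "nat \<Rightarrow> (nat \<Rightarrow> real) \<Rightarrow> nat \<Rightarrow> real \<Rightarrow> nat list set" where
  "S_set l mu m z = {a. length a = m \<and> set a \<subseteq> {1..l} \<and> (\<Sum>j<m. mu (a ! j)) \<ge> z}"

definition H_space :: "nat \<Rightarrow> (nat \<Rightarrow> real) \<Rightarrow> (nat \<Rightarrow> ('n \<Rightarrow> 'k::field) set) \<Rightarrow> nat \<Rightarrow> real \<Rightarrow> ('n list \<Rightarrow> 'k) set" where
  "H_space l mu Vs m z = fspan (\<Union>a\<in>S_set l mu m z. tensor_span (map Vs a))"

end

theory Submission
  imports Defs
begin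


lemma vs_scl: "vector_space (scl :: 'k::field \<Rightarrow> ('a \<Rightarrow> 'k) \<Rightarrow> ('a \<Rightarrow> 'k))"
  by unfold_locales (auto simp: scl_def fun_eq_iff algebra_simps)

interpretation fv: vector_space "scl :: 'k::field \<Rightarrow> ('a \<Rightarrow> 'k) \<Rightarrow> ('a \<Rightarrow> 'k)"
  by (rule vs_scl)

lemma sum_fun_apply: "(\<Sum>x\<in>A. f x) y = (\<Sum>x\<in>A. f x y)"
  by (induction A rule: infinite_finite_induct) auto

lemma sum_scl_apply: "(\<Sum>x\<in>A. scl (c x) (f x)) y = (\<Sum>x\<in>A. c x * f x y)"
  by (simp add: sum_fun_apply scl_def)

definition delta :: "'a \<Rightarrow> 'a \<Rightarrow> 'k::field" where
  "delta x = (\<lambda>y. if y = x then 1 else 0)"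

lemma inj_delta: "inj (delta :: 'a \<Rightarrow> 'a \<Rightarrow> 'k::field)"
  by (auto simp: inj_def delta_def fun_eq_iff split: if_splits)

lemma span_delta:
  assumes "finite A" "\<forall>y. y \<notin> A \<longrightarrow> f y = 0"
  shows "(f :: 'a \<Rightarrow> 'k::field) \<in> fspan (delta ` A)"
proof -
  have "f = (\<Sum>x\<in>A. scl (f x) (delta x))"
    using assms by (auto simp: fun_eq_iff sum_scl_apply delta_def if_distrib cong: if_cong)
  also have "\<dots> \<in> fspan (delta ` A)"
    by (intro fv.span_sum fv.span_scale fv.span_base) auto
  finally show ?thesis .
qed

lemma indep_delta:
  assumes "finite A"
  shows "fv.independent ((delta :: 'a \<Rightarrow> 'a \<Rightarrow> 'k::field) ` A)"
proof (rule fv.independent_if_scalars_zero)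
  show "finite (delta ` A)" using assms by simp
  fix f :: "('a \<Rightarrow> 'k) \<Rightarrow> 'k" and v :: "'a \<Rightarrow> 'k"
  assume s: "(\<Sum>x\<in>delta ` A. scl (f x) x) = 0" and v: "v \<in> delta ` A"
  then obtain a where a: "a \<in> A" "v = delta a" by auto
  have "0 = (\<Sum>x\<in>delta ` A. scl (f x) x) a" using s by simp
  also have "\<dots> = (\<Sum>x\<in>A. f (delta x) * delta x a)"
    by (simp add: sum_scl_apply sum.reindex inj_on_subset[OF inj_delta])
  also have "\<dots> = f (delta a)"
    using assms a by (simp add: delta_def if_distrib cong: if_cong)
  finally show "f v = 0" using a by simp
qed

lemma dim_UNIV_fun: "fdim (UNIV :: ('n::finite \<Rightarrow> 'k::field) set) = card (UNIV :: 'n set)"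
proof -
  have "card ((delta :: 'n \<Rightarrow> 'n \<Rightarrow> 'k) ` UNIV) = card (UNIV :: 'n set)"
    by (simp add: card_image inj_delta)
  moreover have "(UNIV :: ('n \<Rightarrow> 'k) set) \<subseteq> fspan (delta ` UNIV)"
    by (auto intro!: span_delta)
  ultimately show ?thesis
    using fv.dim_unique[of "(delta :: 'n \<Rightarrow> 'n \<Rightarrow> 'k) ` UNIV" UNIV] indep_delta[of "UNIV::'n set"]
    by auto
qed

lemma dim_lower:
  assumes "fv.independent S" "S \<subseteq> V" "V \<subseteq> fspan W" "finite W"
  shows "card S \<le> fdim (V :: ('a \<Rightarrow> 'k::field) set)"
proof -
  obtain B where B: "S \<subseteq> B" "B \<subseteq> V" "fv.independent B" "V \<subseteq> fspan B"
    using fv.maximal_independent_subset_extend[OF assms(2,1)] by blast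
  have "finite B" using fv.independent_span_bound[OF assms(4) B(3)] B(2) assms(3) by auto
  then have "card S \<le> card B" using B(1) by (simp add: card_mono)
  also have "card B = fdim V" using fv.basis_card_eq_dim[OF B(2,4,3)] .
  finally show ?thesis .
qed

lemma dim_mono':
  assumes "V \<subseteq> T" "T \<subseteq> fspan W" "finite W"
  shows "fdim (V :: ('a \<Rightarrow> 'k::field) set) \<le> fdim T"
proof -
  obtain A where A: "A \<subseteq> V" "fv.independent A" "V \<subseteq> fspan A" "card A = fdim V"
    using fv.basis_exists by blast
  show ?thesis using dim_lower[OF A(2) _ assms(2,3)] A(1,4) assms(1) by auto
qed



definition lists_of :: "nat \<Rightarrow> 'a set \<Rightarrow> 'a list set" where
  "lists_of m C = {ws. set ws \<subseteq> C \<and> length ws = m}"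

lemma lists_of_Suc: "lists_of (Suc m) C = (\<lambda>(xs, n). n#xs) ` (lists_of m C \<times> C)"
  unfolding lists_of_def by (rule lists_length_Suc_eq)

lemma finite_lists_of: "finite C \<Longrightarrow> finite (lists_of m C)"
  unfolding lists_of_def by (rule finite_lists_length_eq)

lemma card_lists_of: "finite C \<Longrightarrow> card (lists_of m C) = card C ^ m"
  unfolding lists_of_def by (rule card_lists_length_eq)

lemma tens_Nil: "tens [] is = (if is = [] then 1 else 0)"
  by (simp add: tens_def)

lemma tens_Cons: "tens (w#ws) (i#is) = w i * tens ws is"
  by (simp add: tens_def prod.lessThan_Suc_shift del: prod.lessThan_Suc)

lemma tens_Cons_Nil: "tens (w#ws) [] = 0"
  by (simp add: tens_def)

lemma tens_length: "length is \<noteq> length ws \<Longrightarrow> tens ws is = 0"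
  by (simp add: tens_def)

lemma tens_indep:
  assumes C: "finite C" "fv.independent (C :: ('n \<Rightarrow> 'k::field) set)"
  shows "(\<Sum>ws\<in>lists_of m C. scl (c ws) (tens ws)) = 0 \<Longrightarrow> ws \<in> lists_of m C \<Longrightarrow> c ws = 0"
proof (induction m arbitrary: c ws)
  case 0
  then have ws: "ws = []" by (simp add: lists_of_def)
  have "lists_of 0 C = {[]}" by (auto simp: lists_of_def)
  have "(\<Sum>ws\<in>lists_of 0 C. scl (c ws) (tens ws)) [] = 0" using 0(1) by simp
  then show ?case using ws by (simp add: sum_scl_apply \<open>lists_of 0 C = {[]}\<close> scl_def tens_Nil)
next
  case (Suc m)
  let ?L = "lists_of m C"
  have inj: "inj_on (\<lambda>(xs, n). n#xs) (?L \<times> C)" by (auto simp: inj_on_def)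
  have H: "(\<Sum>w\<in>C. scl (\<Sum>ws'\<in>?L. c (w#ws') * tens ws' is) w) = 0" for "is"
  proof
    fix i
    have "0 = (\<Sum>ws\<in>lists_of (Suc m) C. scl (c ws) (tens ws)) (i#is)" using Suc.prems by simp
    also have "\<dots> = (\<Sum>ws\<in>lists_of (Suc m) C. c ws * tens ws (i#is))" by (simp add: sum_scl_apply)
    also have "\<dots> = (\<Sum>p\<in>?L \<times> C. c (snd p # fst p) * tens (snd p # fst p) (i#is))"
      unfolding lists_of_Suc sum.reindex[OF inj] by (simp add: case_prod_beta)
    also have "\<dots> = (\<Sum>ws'\<in>?L. \<Sum>w\<in>C. c (w # ws') * (w i * tens ws' is))"
      by (simp add: sum.cartesian_product tens_Cons case_prod_beta)
    also have "\<dots> = (\<Sum>w\<in>C. \<Sum>ws'\<in>?L. c (w # ws') * (w i * tens ws' is))"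
      by (rule sum.swap)
    also have "\<dots> = (\<Sum>w\<in>C. scl (\<Sum>ws'\<in>?L. c (w#ws') * tens ws' is) w) i"
      unfolding sum_scl_apply by (intro sum.cong refl) (simp add: sum_distrib_left sum_distrib_right mult_ac)
    finally show "(\<Sum>w\<in>C. scl (\<Sum>ws'\<in>?L. c (w#ws') * tens ws' is) w) i = 0 i" by simp
  qed
  obtain w ws' where ws: "ws = w # ws'" "w \<in> C" "ws' \<in> ?L"
    using Suc.prems(2) by (auto simp: lists_of_def length_Suc_conv)
  have "(\<Sum>ws'\<in>?L. c (w#ws') * tens ws' is) = 0" for "is"
    using H[of "is"] C ws(2) fv.dependent_finite[OF C(1)] by meson
  then have "(\<Sum>ws'\<in>?L. scl (c (w#ws')) (tens ws')) = 0"
    by (simp add: fun_eq_iff sum_scl_apply)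
  from Suc.IH[OF this ws(3)] show ?case using ws(1) by simp
qed

lemma tens_inj:
  assumes C: "finite C" "fv.independent (C :: ('n \<Rightarrow> 'k::field) set)"
  shows "inj_on tens (lists_of m C)"
proof
  fix a b assume ab: "a \<in> lists_of m C" "b \<in> lists_of m C" "tens a = tens b"
  show "a = b"
  proof (rule ccontr)
    assume ne: "a \<noteq> b"
    let ?c = "\<lambda>ws. if ws = a then 1 else if ws = b then -1 else (0::'k)"
    have fin: "finite (lists_of m C)" using C by (simp add: finite_lists_of)
    have "(\<Sum>ws\<in>lists_of m C. scl (?c ws) (tens ws)) = 0"
    proof
      fix y
      have "(\<Sum>ws\<in>lists_of m C. scl (?c ws) (tens ws)) y
          = (\<Sum>ws\<in>lists_of m C. (if ws = a then tens ws y else 0) + (if ws = b then - tens ws y else 0))"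
        unfolding sum_scl_apply by (rule sum.cong) (use ne in auto)
      also have "\<dots> = (\<Sum>ws\<in>lists_of m C. (if ws = a then tens ws y else 0)) + (\<Sum>ws\<in>lists_of m C. (if ws = b then - tens ws y else 0))"
        by (rule sum.distrib)
      also have "\<dots> = 0" using ab fin by (simp add: sum.delta)
      finally show "(\<Sum>ws\<in>lists_of m C. scl (?c ws) (tens ws)) y = 0 y" by simp
    qed
    from tens_indep[OF C this ab(1)] ne show False by simp
  qed
qed

lemma tens_image_indep:
  assumes C: "finite C" "fv.independent (C :: ('n \<Rightarrow> 'k::field) set)"
  shows "fv.independent (tens ` lists_of m C)"
proof (rule fv.independent_if_scalars_zero)
  show "finite (tens ` lists_of m C)" using C by (simp add: finite_lists_of)
  fix f :: "('n list \<Rightarrow> 'k) \<Rightarrow> 'k" and v :: "'n list \<Rightarrow> 'k"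
  assume s: "(\<Sum>x\<in>tens ` lists_of m C. scl (f x) x) = 0" and v: "v \<in> tens ` lists_of m C"
  then obtain ws where ws: "ws \<in> lists_of m C" "v = tens ws" by auto
  have "(\<Sum>ws\<in>lists_of m C. scl (f (tens ws)) (tens ws)) = 0"
    using s by (simp add: sum.reindex[OF tens_inj[OF C]])
  from tens_indep[OF C this ws(1)] show "f v = 0" using ws by simp
qed



lemma lists_of_0: "lists_of 0 C = {[]}"
  by (auto simp: lists_of_def)

lemma sum_lists_of_Suc:
  "(\<Sum>ws\<in>lists_of (Suc m) C. f ws) = (\<Sum>ws\<in>lists_of m C. \<Sum>w\<in>C. f (w # ws))"
proof -
  have inj: "inj_on (\<lambda>(xs, n). n#xs) (lists_of m C \<times> C)" by (auto simp: inj_on_def)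
  show ?thesis unfolding lists_of_Suc sum.reindex[OF inj]
    by (simp add: sum.cartesian_product case_prod_beta)
qed

lemma second_moment:
  fixes h :: "'a \<Rightarrow> real"
  assumes C: "finite C" and h0: "(\<Sum>w\<in>C. h w) = 0"
  shows "(\<Sum>ws\<in>lists_of m C. (sum_list (map h ws))\<^sup>2) * card C
         = real m * real (card C) ^ m * (\<Sum>w\<in>C. (h w)\<^sup>2)"
proof (induction m)
  case 0
  then show ?case by (simp add: lists_of_0)
next
  case (Suc m)
  let ?L = "lists_of m C" and ?N = "real (card C)" and ?Q = "\<Sum>w\<in>C. (h w)\<^sup>2"
  let ?T = "\<Sum>ws\<in>?L. (sum_list (map h ws))\<^sup>2"
  have "(\<Sum>ws\<in>lists_of (Suc m) C. (sum_list (map h ws))\<^sup>2)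
      = (\<Sum>ws\<in>?L. \<Sum>w\<in>C. (h w)\<^sup>2 + 2 * sum_list (map h ws) * h w + (sum_list (map h ws))\<^sup>2)"
    unfolding sum_lists_of_Suc by (simp add: power2_eq_square algebra_simps)
  also have "\<dots> = (\<Sum>ws\<in>?L. ?Q + 2 * sum_list (map h ws) * (\<Sum>w\<in>C. h w) + ?N * (sum_list (map h ws))\<^sup>2)"
    by (simp add: sum.distrib sum_distrib_left)
  also have "\<dots> = ?N ^ m * ?Q + ?N * ?T"
    using C h0 by (simp add: sum.distrib sum_distrib_left card_lists_of)
  finally have "(\<Sum>ws\<in>lists_of (Suc m) C. (sum_list (map h ws))\<^sup>2) * ?N = ?N ^ Suc m * ?Q + ?N * (?T * ?N)"
    by (simp add: algebra_simps)
  also have "\<dots> = real (Suc m) * ?N ^ Suc m * ?Q" using Suc.IH by (simp add: algebra_simps)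
  finally show ?case .
qed

lemma sum_list_shift: "sum_list (map (\<lambda>w. g w - c) ws) = sum_list (map g ws) - real (length ws) * (c::real)"
  by (induction ws) (auto simp: algebra_simps)

lemma count_lemma:
  fixes C :: "'a set" and g :: "'a \<Rightarrow> real" and z :: real
  assumes C: "finite C" "C \<noteq> {}" and M: "(\<Sum>w\<in>C. g w) > 0"
  shows "\<exists>K. eventually (\<lambda>m. 1 - K / real m \<le> real (card {ws\<in>lists_of m C. z \<le> sum_list (map g ws)}) / real (card C) ^ m) sequentially"
proof -
  define N where "N = real (card C)"
  define M where "M = (\<Sum>w\<in>C. g w)"
  define h where "h w = g w - M / N" for w
  define Q where "Q = (\<Sum>w\<in>C. (h w)\<^sup>2)"
  have N: "N > 0" using C by (simp add: N_def card_gt_0_iff)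
  have Mpos: "M > 0" using M by (simp add: M_def)
  have h0: "(\<Sum>w\<in>C. h w) = 0"
    using N by (simp add: h_def sum_subtractf M_def N_def)
  define K where "K = 4 * N * Q / M\<^sup>2"
  have ev: "eventually (\<lambda>m. 1 \<le> m \<and> nat \<lceil>2 * z * N / M\<rceil> \<le> m) sequentially"
    by (intro eventually_conj eventually_ge_at_top)
  show ?thesis
  proof (intro exI[of _ K] eventually_mono[OF ev], elim conjE)
    fix m :: nat
    assume m1: "1 \<le> m" and m2: "nat \<lceil>2 * z * N / M\<rceil> \<le> m"
    let ?L = "lists_of m C"
    define G where "G = {ws\<in>?L. z \<le> sum_list (map g ws)}"
    define B where "B = {ws\<in>?L. \<not> z \<le> sum_list (map g ws)}"
    have finL: "finite ?L" using C by (simp add: finite_lists_of)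
    have cardL: "card G + card B = card C ^ m"
    proof -
      have "card G + card B = card (G \<union> B)"
        by (rule card_Un_disjoint[symmetric]) (auto simp: G_def B_def intro: finite_subset[OF _ finL])
      also have "G \<union> B = ?L" by (auto simp: G_def B_def)
      finally show ?thesis using C by (simp add: card_lists_of)
    qed
    have rm: "real m \<ge> 2 * z * N / M" using m2 by linarith
    define d where "d = real m * M / (2 * N)"
    have dpos: "d > 0" using m1 N Mpos by (simp add: d_def)
    have zd: "z \<le> d"
    proof -
      have "2 * z * N / M * M / (2 * N) \<le> real m * M / (2 * N)"
        using rm Mpos N by (intro divide_right_mono mult_right_mono) auto
      then show ?thesis using Mpos N by (simp add: d_def)
    qed
    have sh: "sum_list (map h ws) = sum_list (map g ws) - real m * M / N" if "ws \<in> ?L" for ws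
    proof -
      have "h = (\<lambda>w. g w - M / N)" by (simp add: h_def fun_eq_iff)
      then show ?thesis using that by (simp add: sum_list_shift lists_of_def)
    qed
    have sq: "d\<^sup>2 \<le> (sum_list (map h ws))\<^sup>2" if "ws \<in> B" for ws
    proof -
      have ws: "ws \<in> ?L" "sum_list (map g ws) < z" using that by (auto simp: B_def)
      have "real m * M / N = 2 * d" using N by (simp add: d_def)
      then have "sum_list (map h ws) < - d" using sh[OF ws(1)] ws(2) zd by linarith
      then have "d \<le> \<bar>sum_list (map h ws)\<bar>" by linarith
      then show ?thesis using dpos by (metis abs_ge_zero abs_of_pos power2_abs power_mono)
    qed
    have "real (card B) * d\<^sup>2 = (\<Sum>ws\<in>B. d\<^sup>2)" by simp
    also have "\<dots> \<le> (\<Sum>ws\<in>B. (sum_list (map h ws))\<^sup>2)"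
      by (rule sum_mono) (rule sq)
    also have "\<dots> \<le> (\<Sum>ws\<in>?L. (sum_list (map h ws))\<^sup>2)"
      by (rule sum_mono2[OF finL]) (auto simp: B_def)
    finally have "real (card B) * d\<^sup>2 * N \<le> real m * N ^ m * Q"
      using second_moment[OF C(1) h0, of m] N unfolding N_def Q_def
      by (metis mult_right_mono of_nat_0_le_iff)
    then have "real (card B) * (real m * real m * M\<^sup>2 / (4 * N)) \<le> real m * N ^ m * Q"
      using N by (simp add: d_def power2_eq_square field_simps)
    moreover have "real (card B) * (real m * real m * M\<^sup>2 / (4 * N)) = real m * (real (card B) * (real m * M\<^sup>2 / (4 * N)))"
      by (simp add: algebra_simps)
    moreover have "real m * N ^ m * Q = real m * (N ^ m * Q)" by simp
    ultimately have "real (card B) * (real m * M\<^sup>2 / (4 * N)) \<le> N ^ m * Q"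
      using m1 by (metis mult_le_cancel_left_pos of_nat_0_less_iff less_le_trans zero_less_one)
    then have "real (card B) \<le> N ^ m * Q * (4 * N) / (real m * M\<^sup>2)"
      using m1 Mpos N by (simp add: field_simps)
    also have "\<dots> = N ^ m * (K / real m)" by (simp add: K_def mult_ac)
    finally have "real (card B) / N ^ m \<le> K / real m" using N by (simp add: field_simps)
    moreover have "real (card G) / N ^ m = 1 - real (card B) / N ^ m"
      using cardL N by (simp add: field_simps N_def flip: of_nat_add)
    ultimately show "1 - K / real m \<le> real (card G) / real (card C) ^ m"
      by (simp add: N_def G_def)
  qed
qed



lemma adapted_basis:
  fixes Vs :: "nat \<Rightarrow> ('n \<Rightarrow> 'k::field) set"
  assumes HN: "is_HN_filtration n lam F l Vs"
  shows "\<exists>B. B 0 = {} \<and> (\<forall>i\<le>l. B i \<subseteq> Vs i \<and> fv.independent (B i) \<and> Vs i \<subseteq> fspan (B i))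
            \<and> (\<forall>i j. i \<le> j \<longrightarrow> j \<le> l \<longrightarrow> B i \<subseteq> B j)"
proof -
  have V0: "Vs 0 = {0}"
    using HN unfolding is_HN_filtration_def by blast
  have inc: "\<And>i. i < l \<Longrightarrow> Vs i \<subset> Vs (Suc i)"
    using HN unfolding is_HN_filtration_def by blast
  have "k \<le> l \<Longrightarrow> \<exists>B. B 0 = {} \<and> (\<forall>i\<le>k. B i \<subseteq> Vs i \<and> fv.independent (B i) \<and> Vs i \<subseteq> fspan (B i))
            \<and> (\<forall>i<k. B i \<subseteq> B (Suc i))" for k
  proof (induction k)
    case 0
    show ?case
      by (rule exI[of _ "\<lambda>_. {}"]) (simp add: V0 fv.span_zero fv.independent_empty)
  next
    case (Suc k)
    from Suc.IH[OF Suc_leD[OF Suc.prems]] obtain B where B: "B 0 = {}" "\<forall>i\<le>k. B i \<subseteq> Vs i \<and> fv.independent (B i) \<and> Vs i \<subseteq> fspan (B i)"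
      "\<forall>i<k. B i \<subseteq> B (Suc i)" by blast
    have "B k \<subseteq> Vs (Suc k)" using B(2) inc[of k] Suc.prems by auto
    then obtain B' where B': "B k \<subseteq> B'" "B' \<subseteq> Vs (Suc k)" "fv.independent B'" "Vs (Suc k) \<subseteq> fspan B'"
      using fv.maximal_independent_subset_extend[of "B k" "Vs (Suc k)"] B(2) by blast
    show ?case
      apply (rule exI[of _ "B(Suc k := B')"])
      using B B' by (auto simp: less_Suc_eq le_Suc_eq)
  qed
  from this[OF order_refl] obtain B where B: "B 0 = {}" "\<forall>i\<le>l. B i \<subseteq> Vs i \<and> fv.independent (B i) \<and> Vs i \<subseteq> fspan (B i)"
      "\<forall>i<l. B i \<subseteq> B (Suc i)" by blast
  have mono: "B i \<subseteq> B j" if "i \<le> j" "j \<le> l" for i j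
    by (rule lift_Suc_mono_le_ivl[of "{..<l}" B, OF _ that(1)]) (use B(3) that in auto)
  show ?thesis using B mono by blast
qed

lemma tensor_span_sub:
  "tensor_span (Ws :: ('n::finite \<Rightarrow> 'k::field) set list) \<subseteq> fspan (delta ` lists_of (length Ws) UNIV)"
  unfolding tensor_span_def
proof (rule fv.span_minimal[OF _ fv.subspace_span], safe)
  fix ws :: "('n \<Rightarrow> 'k) list" assume len: "length ws = length Ws"
  have fin: "finite (lists_of (length Ws) (UNIV :: 'n set))" by (simp add: finite_lists_of)
  then show "tens ws \<in> fspan (delta ` lists_of (length Ws) UNIV)"
    by (intro span_delta) (simp_all add: lists_of_def tens_length len)
qed

lemma card_lists_UNIV: "card (lists_of m (UNIV :: 'n::finite set)) = card (UNIV :: 'n set) ^ m"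
  by (simp add: card_lists_of)



lemma ratio_bound:
  fixes C :: "('n::finite \<Rightarrow> 'k::field) set" and Vs :: "nat \<Rightarrow> ('n \<Rightarrow> 'k) set"
    and lev :: "('n \<Rightarrow> 'k) \<Rightarrow> nat" and mu :: "nat \<Rightarrow> real"
  assumes C: "finite C" "fv.independent C"
    and lev: "\<And>w. w \<in> C \<Longrightarrow> lev w \<in> {1..l} \<and> w \<in> Vs (lev w)"
  shows "real (card {ws\<in>lists_of m C. z \<le> sum_list (map (\<lambda>w. mu (lev w)) ws)}) / real (card (UNIV :: 'n set)) ^ m
           \<le> real (fdim (H_space l mu Vs m z)) / real (fdim (tensor_span (replicate m (UNIV :: ('n \<Rightarrow> 'k) set))))
         \<and> real (fdim (H_space l mu Vs m z)) / real (fdim (tensor_span (replicate m (UNIV :: ('n \<Rightarrow> 'k) set)))) \<le> 1"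
proof -
  let ?G = "{ws\<in>lists_of m C. z \<le> sum_list (map (\<lambda>w. mu (lev w)) ws)}"
  let ?W = "(delta :: 'n list \<Rightarrow> 'n list \<Rightarrow> 'k) ` lists_of m UNIV"
  let ?T = "tensor_span (replicate m (UNIV :: ('n \<Rightarrow> 'k) set))"
  let ?H = "H_space l mu Vs m z"
  have finW: "finite ?W" by (simp add: finite_lists_of)
  have TW: "?T \<subseteq> fspan ?W" using tensor_span_sub[of "replicate m (UNIV :: ('n \<Rightarrow> 'k) set)"] by simp
  have HT: "?H \<subseteq> ?T"
    unfolding H_space_def
  proof (rule fv.span_minimal)
    show "fsubspace ?T" unfolding tensor_span_def by (rule fv.subspace_span)
    show "(\<Union>a\<in>S_set l mu m z. tensor_span (map Vs a)) \<subseteq> ?T"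
    proof (rule UN_least)
      fix a assume "a \<in> S_set l mu m z"
      then have len: "length a = m" by (simp add: S_set_def)
      show "tensor_span (map Vs a) \<subseteq> ?T"
        unfolding tensor_span_def by (rule fv.span_mono) (auto simp: len)
    qed
  qed
  have HW: "?H \<subseteq> fspan ?W" using HT TW by blast
  have DN: "fdim ?T \<le> card (UNIV :: 'n set) ^ m"
  proof -
    have "fdim ?T \<le> card ?W" by (rule fv.dim_le_card[OF TW finW])
    also have "\<dots> \<le> card (lists_of m (UNIV :: 'n set))" by (rule card_image_le) (simp add: finite_lists_of)
    finally show ?thesis by (simp add: card_lists_UNIV)
  qed
  have HD: "fdim ?H \<le> fdim ?T" by (rule dim_mono'[OF HT TW finW])
  have GH: "tens ` ?G \<subseteq> ?H"
  proof
    fix v assume "v \<in> tens ` ?G"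
    then obtain ws where ws: "ws \<in> lists_of m C" "z \<le> sum_list (map (\<lambda>w. mu (lev w)) ws)" "v = tens ws"
      by auto
    let ?a = "map lev ws"
    have len: "length ws = m" and setws: "set ws \<subseteq> C" using ws(1) by (auto simp: lists_of_def)
    have "sum_list (map (\<lambda>w. mu (lev w)) ws) = (\<Sum>j<m. mu (?a ! j))"
      by (simp add: sum_list_sum_nth len atLeast0LessThan)
    then have aS: "?a \<in> S_set l mu m z"
      using ws(2) len setws lev unfolding S_set_def by (auto simp: subset_iff)
    have "tens ws \<in> tensor_span (map Vs ?a)"
      unfolding tensor_span_def
      by (rule fv.span_base) (use len setws lev in \<open>auto simp: subset_iff\<close>)
    then show "v \<in> ?H" unfolding H_space_def using aS ws(3)
      by (meson UN_I fv.span_superset subsetD)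
  qed
  have indG: "fv.independent (tens ` ?G)"
    by (rule fv.independent_mono[OF tens_image_indep[OF C, of m]]) auto
  have cardG: "card (tens ` ?G) = card ?G"
    by (rule card_image, rule inj_on_subset[OF tens_inj[OF C, of m]]) auto
  have GleH: "card ?G \<le> fdim ?H"
    using dim_lower[OF indG GH HW finW] cardG by simp
  have r1: "real (fdim ?H) / real (fdim ?T) \<le> 1"
    using HD by (cases "fdim ?T = 0") (auto simp: divide_le_eq_1)
  have r2: "real (card ?G) / real (card (UNIV :: 'n set)) ^ m \<le> real (fdim ?H) / real (fdim ?T)"
  proof (cases "fdim ?T = 0")
    case True
    then show ?thesis using GleH HD by simp
  next
    case False
    have "real (card ?G) / real (card (UNIV :: 'n set)) ^ m \<le> real (fdim ?H) / real (card (UNIV :: 'n set)) ^ m"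
      using GleH by (simp add: divide_right_mono)
    also have "\<dots> \<le> real (fdim ?H) / real (fdim ?T)"
      using False DN card_gt_0_iff[of "UNIV :: 'n set"] by (intro divide_left_mono) (auto simp flip: of_nat_power)
    finally show ?thesis .
  qed
  show ?thesis using r1 r2 by blast
qed



theorem theorem1p5:
  fixes n :: nat and lam :: "nat \<Rightarrow> real" and F :: "nat \<Rightarrow> ('n::finite \<Rightarrow> 'k::field_char_0) set"
    and l :: nat and Vs :: "nat \<Rightarrow> ('n \<Rightarrow> 'k) set" and z :: nat
  assumes "alg_closed TYPE('k)"
    and "is_filtration n lam F"
    and "is_HN_filtration n lam F l Vs"
    and "(\<Sum>i=1..l. real (HN_r Vs i) * HN_mu n lam F Vs i) > 0"
  shows "(\<lambda>m. real (fdim (H_space l (HN_mu n lam F Vs) Vs m (real z)))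
               / real (fdim (tensor_span (replicate m (UNIV :: ('n \<Rightarrow> 'k) set)))))
         \<longlonglongrightarrow> 1"
proof -
  let ?mu = "HN_mu n lam F Vs"
  have VsU: "Vs l = UNIV"
    using assms(3) unfolding is_HN_filtration_def by blast
  obtain B where B0: "B 0 = {}"
    and Bp: "\<forall>i\<le>l. B i \<subseteq> Vs i \<and> fv.independent (B i) \<and> Vs i \<subseteq> fspan (B i)"
    and Bm: "\<forall>i j. i \<le> j \<longrightarrow> j \<le> l \<longrightarrow> B i \<subseteq> B j"
    using adapted_basis[OF assms(3)] by blast
  define C where "C = B l"
  have allspan: "X \<subseteq> fspan ((delta :: 'n \<Rightarrow> 'n \<Rightarrow> 'k) ` UNIV)" for X :: "('n \<Rightarrow> 'k) set"
    by (auto intro!: span_delta)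
  have finB: "finite (B i)" if "i \<le> l" for i
    using fv.independent_span_bound[OF _ _ allspan[of "B i"]] Bp that by simp
  have cardB: "card (B i) = fdim (Vs i)" if "i \<le> l" for i
    using fv.basis_card_eq_dim[of "B i" "Vs i"] Bp that by blast
  have finC: "finite C" and indC: "fv.independent C" using finB Bp by (auto simp: C_def)
  have cardC: "card C = card (UNIV :: 'n set)"
    using cardB[of l] VsU dim_UNIV_fun by (simp add: C_def)
  have Cne: "C \<noteq> {}"
    using cardC finite_UNIV_card_ge_0[where 'a='n] by auto
  define lev where "lev w = (LEAST i. w \<in> B i)" for w
  have lev: "lev w \<in> {1..l} \<and> w \<in> B (lev w) \<and> (\<forall>i < lev w. w \<notin> B i)" if w: "w \<in> C" for w
  proof -
    have inB: "w \<in> B (lev w)" unfolding lev_def by (rule LeastI[of _ l]) (use w in \<open>simp add: C_def\<close>)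
    have le: "lev w \<le> l" unfolding lev_def by (rule Least_le) (use w in \<open>simp add: C_def\<close>)
    have "lev w \<noteq> 0" using inB B0 by (metis empty_iff)
    moreover have "\<forall>i < lev w. w \<notin> B i" unfolding lev_def using not_less_Least by blast
    ultimately show ?thesis using inB le by auto
  qed
  have levVs: "lev w \<in> {1..l} \<and> w \<in> Vs (lev w)" if "w \<in> C" for w
    using lev[OF that] Bp by auto
  have fib: "{w\<in>C. lev w = i} = B i - B (i - 1)" if i: "i \<in> {1..l}" for i
  proof
    show "{w\<in>C. lev w = i} \<subseteq> B i - B (i - 1)"
    proof
      fix w assume "w \<in> {w\<in>C. lev w = i}"
      then have w: "w \<in> C" "lev w = i" by auto
      have "i - 1 < lev w" using w(2) i by auto
      then show "w \<in> B i - B (i - 1)" using lev[OF w(1)] w(2) by blast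
    qed
    show "B i - B (i - 1) \<subseteq> {w\<in>C. lev w = i}"
    proof
      fix w assume w: "w \<in> B i - B (i - 1)"
      have wC: "w \<in> C" using w Bm i by (auto simp: C_def)
      have "lev w \<le> i" unfolding lev_def by (rule Least_le) (use w in auto)
      moreover have "\<not> lev w < i"
      proof
        assume "lev w < i"
        then have "B (lev w) \<subseteq> B (i - 1)" using Bm i by auto
        then show False using lev[OF wC] w by auto
      qed
      ultimately show "w \<in> {w\<in>C. lev w = i}" using wC by auto
    qed
  qed
  define g where "g w = ?mu (lev w)" for w
  have "(\<Sum>w\<in>C. g w) = (\<Sum>i\<in>{1..l}. \<Sum>w\<in>{x\<in>C. lev x = i}. g w)"
    by (rule sum.group[symmetric]) (use finC levVs in auto)
  also have "\<dots> = (\<Sum>i\<in>{1..l}. real (HN_r Vs i) * ?mu i)"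
  proof (rule sum.cong[OF refl])
    fix i assume i: "i \<in> {1..l}"
    have sub: "B (i - 1) \<subseteq> B i" using Bm i by auto
    have "card (B i - B (i - 1)) = HN_r Vs i"
      using card_Diff_subset[OF finite_subset[OF sub finB] sub] i cardB
      by (simp add: HN_r_def)
    moreover have "(\<Sum>w\<in>{x\<in>C. lev x = i}. g w) = (\<Sum>w\<in>{x\<in>C. lev x = i}. ?mu i)"
      by (rule sum.cong) (auto simp: g_def)
    ultimately show "(\<Sum>w\<in>{x\<in>C. lev x = i}. g w) = real (HN_r Vs i) * ?mu i"
      using fib[OF i] by simp
  qed
  finally have sumg: "(\<Sum>w\<in>C. g w) > 0" using assms(4) by simp
  obtain K where K: "eventually (\<lambda>m. 1 - K / real m \<le> real (card {ws\<in>lists_of m C. real z \<le> sum_list (map g ws)}) / real (card C) ^ m) sequentially"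
    using count_lemma[OF finC Cne sumg, of "real z"] by blast
  have gfun: "g = (\<lambda>w. ?mu (lev w))" by (simp add: g_def fun_eq_iff)
  let ?r = "\<lambda>m. real (fdim (H_space l ?mu Vs m (real z))) / real (fdim (tensor_span (replicate m (UNIV :: ('n \<Rightarrow> 'k) set))))"
  have RB: "real (card {ws\<in>lists_of m C. real z \<le> sum_list (map g ws)}) / real (card C) ^ m \<le> ?r m \<and> ?r m \<le> 1" for m
    using ratio_bound[OF finC indC levVs, of m "real z" ?mu] cardC gfun by simp
  show ?thesis
  proof (rule tendsto_sandwich[of "\<lambda>m. 1 - K / real m" _ _ "\<lambda>_. 1"])
    show "eventually (\<lambda>m. 1 - K / real m \<le> ?r m) sequentially"
      using K by eventually_elim (use RB in \<open>meson order_trans\<close>)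
    show "eventually (\<lambda>m. ?r m \<le> 1) sequentially" using RB by simp
    show "(\<lambda>m. 1 - K / real m) \<longlonglongrightarrow> 1"
      using tendsto_diff[OF tendsto_const lim_const_over_n[of K]] by simp
    show "(\<lambda>m. 1::real) \<longlonglongrightarrow> 1" by simp
  qed
qed

end
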